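(* Let $\mathcal C$ be a concept hierarchy with maximum level $\ell_{max}$ and let $r_1,r_2\in[0,1]$ with $r_1\le r_2$. Let $\mathcal N$ be a network with maximum layer $\ell_{max}$ in which every concept $c\in C_\ell$ is assigned a neuron $rep(c)\in N_\ell$, with distinct concepts assigned distinct neurons (for $c\in C_0$, $rep(c)$ is the input neuron given by the bijection $rep$); let $R=rep(C)$ and $rep^{-1}:R\to C$ its inverse. Let the weight of the edge from $u\in N_\ell$ to $v\in N_{\ell+1}$ be $1$ if $u,v\in R$ and $rep^{-1}(u)\in children(rep^{-1}(v))$, and $0$ otherwise; let every non-input neuron have threshold $\tau=\frac{(r_1+r_2)k}{2}$, and let all engaged flags be $0$ at all times. Then $\mathcal N$ $(r_1,r_2)$-recognizes $\mathcal C$. Moreover, the required time is $\ell_{max}$, i.e., if $B$ is presented at time $t$, every decision required by recognition takes place at a time at most $t+\ell_{max}$.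
   Context: Data model. Fix positive integers $\ell_{max},n,k$. A universal set $D$ of concepts is partitioned into disjoint sets $D_0,\dots,D_{\ell_{max}}$ with $|D_0|=n$. A concept hierarchy consists of $C\subseteq D$ and a function $children$: with $C_\ell=C\cap D_\ell$, each $c\in C_\ell$ ($1\le\ell\le\ell_{max}$) has $children(c)\subseteq C_{\ell-1}$, $|children(c)|=k$; $|C_{\ell_{max}}|=k$; distinct concepts on the same level have disjoint children sets. For $B\subseteq D_0$ and $r\in[0,1]$: $B_0=B\cap C_0$, $B_\ell=\{c\in C_\ell: |children(c)\cap B_{\ell-1}|\ge rk\}$, $supported_r(B)=\bigcup_\ell B_\ell$. Network model. Layers $N_0,\dots,N_{\ell'_{max}}$ of $n$ neurons each, complete connections from each layer to the next and no other edges, a fixed bijection $rep:D_0\to N_0$. Discrete time; input neurons' firing is set externally. A non-input neuron $u$ has potential $pot^u(t)=\sum_v weight(v,u)\,y^v(t-1)$ over the neurons $v$ of the layer below, and fires at time $t$ (i.e. $y^u(t)=1$) iff $pot^u(t)\ge\tau$; weights change only when engaged flags are $1$. $B\subseteq D_0$ is presented at time $t$ if the input neurons firing at time $t$ are exactly $rep(B)$; $layer(u)$ is the index of the layer containing $u$. Recognition. $\mathcal N$ $(r_1,r_2)$-recognizes $c\in C$ if it contains a unique neuron $rep(c)$ such that whenever $B\subseteq C_0$ is presented at time $t$: if $c\in supported_{r_2}(B)$ then $rep(c)$ fires at time $t+layer(rep(c))$, and if $c\notin supported_{r_1}(B)$ then $rep(c)$ does not fire at time $t+layer(rep(c))$.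 $\mathcal N$ recognizes $\mathcal C$ if it recognizes every $c\in C$. *)

theory Defs
  imports Complex_Main
begin

definition level_set :: "'c set \<Rightarrow> ('c \<Rightarrow> nat) \<Rightarrow> nat \<Rightarrow> 'c set" where
  "level_set A lev l = {c \<in> A. lev c = l}"

definition concept_hierarchy ::
  "nat \<Rightarrow> nat \<Rightarrow> nat \<Rightarrow> 'c set \<Rightarrow> ('c \<Rightarrow> nat) \<Rightarrow> 'c set \<Rightarrow> ('c \<Rightarrow> 'c set) \<Rightarrow> bool" where
  "concept_hierarchy lmax n k D lev C children \<longleftrightarrow>
     (\<forall>c\<in>D. lev c \<le> lmax) \<and>
     finite (level_set D lev 0) \<and> card (level_set D lev 0) = n \<and>
     C \<subseteq> D \<and>
     (\<forall>c\<in>C. 1 \<le> lev c \<longrightarrow>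
          children c \<subseteq> level_set C lev (lev c - 1) \<and> finite (children c) \<and> card (children c) = k) \<and>
     finite (level_set C lev lmax) \<and> card (level_set C lev lmax) = k \<and>
     (\<forall>c\<in>C. \<forall>d\<in>C. 1 \<le> lev c \<and> lev c = lev d \<and> c \<noteq> d \<longrightarrow> children c \<inter> children d = {})"

fun supp_level ::
  "'c set \<Rightarrow> ('c \<Rightarrow> nat) \<Rightarrow> ('c \<Rightarrow> 'c set) \<Rightarrow> nat \<Rightarrow> real \<Rightarrow> 'c set \<Rightarrow> nat \<Rightarrow> 'c set" where
  "supp_level C lev children k r B 0 = B \<inter> level_set C lev 0"
| "supp_level C lev children k r B (Suc l) =
     {c \<in> level_set C lev (Suc l).
        real (card (children c \<inter> supp_level C lev children k r B l)) \<ge> r * real k}"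

definition supported ::
  "nat \<Rightarrow> 'c set \<Rightarrow> ('c \<Rightarrow> nat) \<Rightarrow> ('c \<Rightarrow> 'c set) \<Rightarrow> nat \<Rightarrow> real \<Rightarrow> 'c set \<Rightarrow> 'c set" where
  "supported lmax C lev children k r B = (\<Union>l\<le>lmax. supp_level C lev children k r B l)"

text \<open>A neuron is a pair (layer, index); layer l consists of the n neurons (l, i), i < n.\<close>

type_synonym neuron = "nat \<times> nat"

definition layer_neurons :: "nat \<Rightarrow> nat \<Rightarrow> neuron set" where
  "layer_neurons n l = {(l, i) | i. i < n}"

definition neurons :: "nat \<Rightarrow> nat \<Rightarrow> neuron set" where
  "neurons lmax' n = (\<Union>l\<le>lmax'. layer_neurons n l)"

abbreviation layer :: "neuron \<Rightarrow> nat" where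
  "layer u \<equiv> fst u"

text \<open>An execution (firing pattern y t u) of the network with (fixed, since all engaged flags
  are 0) weights w and threshold tau. Input neurons (layer 0) are set externally, hence
  unconstrained; non-input neurons obey the threshold rule at every time t+1. The states of
  non-input neurons at time 0 are arbitrary.\<close>

definition net_run ::
  "nat \<Rightarrow> nat \<Rightarrow> (neuron \<Rightarrow> neuron \<Rightarrow> real) \<Rightarrow> real \<Rightarrow> (nat \<Rightarrow> neuron \<Rightarrow> bool) \<Rightarrow> bool" where
  "net_run lmax' n w \<tau> y \<longleftrightarrow>
     (\<forall>t. \<forall>u\<in>neurons lmax' n. 1 \<le> layer u \<longrightarrow>
        (y (Suc t) u \<longleftrightarrow>
           (\<Sum>v\<in>layer_neurons n (layer u - 1). w v u * (if y (t) v then 1 else 0)) \<ge> \<tau>))"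

definition presented :: "nat \<Rightarrow> ('c \<Rightarrow> neuron) \<Rightarrow> 'c set \<Rightarrow> (nat \<Rightarrow> neuron \<Rightarrow> bool) \<Rightarrow> nat \<Rightarrow> bool" where
  "presented n rep0 B y t \<longleftrightarrow> {u \<in> layer_neurons n 0. y t u} = rep0 ` B"

definition recognizes_via ::
  "nat \<Rightarrow> nat \<Rightarrow> (neuron \<Rightarrow> neuron \<Rightarrow> real) \<Rightarrow> real \<Rightarrow> ('c \<Rightarrow> neuron) \<Rightarrow>
   nat \<Rightarrow> nat \<Rightarrow> 'c set \<Rightarrow> ('c \<Rightarrow> nat) \<Rightarrow> ('c \<Rightarrow> 'c set) \<Rightarrow> real \<Rightarrow> real \<Rightarrow> 'c \<Rightarrow> neuron \<Rightarrow> bool" where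
  "recognizes_via lmax' n w \<tau> rep0 lmax k C lev children r1 r2 c u \<longleftrightarrow>
     u \<in> neurons lmax' n \<and>
     (\<forall>y B t. net_run lmax' n w \<tau> y \<longrightarrow> B \<subseteq> level_set C lev 0 \<longrightarrow> presented n rep0 B y t \<longrightarrow>
        (c \<in> supported lmax C lev children k r2 B \<longrightarrow> y (t + layer u) u) \<and>
        (c \<notin> supported lmax C lev children k r1 B \<longrightarrow> \<not> y (t + layer u) u))"

definition recognizes_hierarchy ::
  "nat \<Rightarrow> nat \<Rightarrow> (neuron \<Rightarrow> neuron \<Rightarrow> real) \<Rightarrow> real \<Rightarrow> ('c \<Rightarrow> neuron) \<Rightarrow>
   nat \<Rightarrow> nat \<Rightarrow> 'c set \<Rightarrow> ('c \<Rightarrow> nat) \<Rightarrow> ('c \<Rightarrow> 'c set) \<Rightarrow> real \<Rightarrow> real \<Rightarrow> bool" where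
  "recognizes_hierarchy lmax' n w \<tau> rep0 lmax k C lev children r1 r2 \<longleftrightarrow>
     (\<forall>c\<in>C. \<exists>u. recognizes_via lmax' n w \<tau> rep0 lmax k C lev children r1 r2 c u)"

definition hier_weight :: "'c set \<Rightarrow> ('c \<Rightarrow> 'c set) \<Rightarrow> ('c \<Rightarrow> neuron) \<Rightarrow> neuron \<Rightarrow> neuron \<Rightarrow> real" where
  "hier_weight C children rep u v =
     (if layer v = layer u + 1 \<and> u \<in> rep ` C \<and> v \<in> rep ` C \<and>
         the_inv_into C rep u \<in> children (the_inv_into C rep v) then 1 else 0)"

end

theory Submission
  imports Defs
begin

lemma finite_layer: "finite (layer_neurons n l)"
proof -
  have "layer_neurons n l = (\<lambda>i. (l,i)) ` {..<n}" unfolding layer_neurons_def by auto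
  thus ?thesis by simp
qed

lemma supp_level_lev:
  "c \<in> supp_level C lev children k r B l \<Longrightarrow> c \<in> C \<and> lev c = l"
  by (cases l) (auto simp: level_set_def)

lemma supported_iff:
  assumes "c \<in> C" "lev c \<le> lmax"
  shows "c \<in> supported lmax C lev children k r B \<longleftrightarrow> c \<in> supp_level C lev children k r B (lev c)"
  using assms supp_level_lev unfolding supported_def by fastforce

lemma sum_ind_card:
  assumes "finite A"
  shows "(\<Sum>d\<in>A. (if P d then 1 else 0::real)) = real (card {d\<in>A. P d})"
proof -
  have "(\<Sum>d\<in>A. (if P d then 1 else 0::real)) = (\<Sum>d\<in>{d\<in>A. P d}. 1)"
    using assms by (simp add: sum.inter_filter[symmetric])
  thus ?thesis by simp
qed

lemma pot_eq:
  assumes CH: "concept_hierarchy lmax n k D lev C children"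
    and R: "\<forall>c\<in>C. rep c \<in> layer_neurons n (lev c)"
    and inj: "inj_on rep C"
    and c: "c \<in> C" "lev c = Suc l"
  shows "(\<Sum>v\<in>layer_neurons n l. hier_weight C children rep v (rep c) * (if y v then 1 else 0))
         = real (card {d \<in> children c. y (rep d)})"
proof -
  have ch: "children c \<subseteq> level_set C lev l" "finite (children c)"
  proof -
    have "\<forall>c\<in>C. 1 \<le> lev c \<longrightarrow> children c \<subseteq> level_set C lev (lev c - 1) \<and> finite (children c)"
      using CH unfolding concept_hierarchy_def by blast
    hence "1 \<le> lev c \<longrightarrow> children c \<subseteq> level_set C lev (lev c - 1) \<and> finite (children c)" using c(1) by blast
    hence "children c \<subseteq> level_set C lev (lev c - 1) \<and> finite (children c)" using c(2) by simp
    thus "children c \<subseteq> level_set C lev l" "finite (children c)" using c(2) by simp_all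
  qed
  have chC: "children c \<subseteq> C" using ch(1) unfolding level_set_def by auto
  have sub: "rep ` children c \<subseteq> layer_neurons n l"
    using ch(1) R unfolding level_set_def by auto
  have invc: "the_inv_into C rep (rep c) = c" using the_inv_into_f_f[OF inj c(1)] .
  have lay: "layer (rep c) = Suc l" using R c unfolding layer_neurons_def by auto
  have zero: "hier_weight C children rep v (rep c) * (if y v then 1 else 0) = 0"
    if "v \<in> layer_neurons n l - rep ` children c" for v
  proof -
    have "hier_weight C children rep v (rep c) = 0"
    proof (rule ccontr)
      assume "hier_weight C children rep v (rep c) \<noteq> 0"
      then obtain d where d: "d \<in> C" "v = rep d" "the_inv_into C rep v \<in> children c"
        unfolding hier_weight_def invc by (auto split: if_splits)
      have "the_inv_into C rep v = d" using the_inv_into_f_f[OF inj d(1)] d(2) by simp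
      with d that show False by auto
    qed
    thus ?thesis by simp
  qed
  have "(\<Sum>v\<in>layer_neurons n l. hier_weight C children rep v (rep c) * (if y v then 1 else 0))
      = (\<Sum>v\<in>rep ` children c. hier_weight C children rep v (rep c) * (if y v then 1 else 0))"
    by (rule sum.mono_neutral_right[OF finite_layer sub]) (use zero in auto)
  also have "\<dots> = (\<Sum>d\<in>children c. hier_weight C children rep (rep d) (rep c) * (if y (rep d) then 1 else 0))"
    by (rule sum.reindex_cong[where l=rep]) (use inj_on_subset[OF inj chC] in auto)
  also have "\<dots> = (\<Sum>d\<in>children c. (if y (rep d) then 1 else 0))"
  proof (rule sum.cong)
    fix d assume d: "d \<in> children c"
    have dC: "d \<in> C" using d chC by auto
    have "lev d = l" using d ch(1) unfolding level_set_def by auto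
    hence "layer (rep d) = l" using R dC unfolding layer_neurons_def by auto
    hence "hier_weight C children rep (rep d) (rep c) = 1"
      unfolding hier_weight_def using lay dC c(1) invc the_inv_into_f_f[OF inj dC] d by auto
    thus "hier_weight C children rep (rep d) (rep c) * (if y (rep d) then 1 else 0)
        = (if y (rep d) then 1 else 0)" by simp
  qed simp
  also have "\<dots> = real (card {d \<in> children c. y (rep d)})"
    by (rule sum_ind_card[OF ch(2)])
  finally show ?thesis .
qed

theorem mainTheorem2:
  fixes lmax n k :: nat
    and D C :: "'c set" and lev :: "'c \<Rightarrow> nat" and children :: "'c \<Rightarrow> 'c set"
    and r1 r2 :: real
    and rep0 rep :: "'c \<Rightarrow> neuron"
  assumes "0 < lmax" and "0 < n" and "0 < k"
    and "concept_hierarchy lmax n k D lev C children"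
    and "0 \<le> r1" and "r1 \<le> r2" and "r2 \<le> 1"
    and "bij_betw rep0 (level_set D lev 0) (layer_neurons n 0)"
    and "\<forall>c\<in>C. rep c \<in> layer_neurons n (lev c)"
    and "inj_on rep C"
    and "\<forall>c\<in>level_set C lev 0. rep c = rep0 c"
  shows "recognizes_hierarchy lmax n (hier_weight C children rep) ((r1 + r2) * real k / 2)
           rep0 lmax k C lev children r1 r2
         \<and> (\<forall>c\<in>C. recognizes_via lmax n (hier_weight C children rep) ((r1 + r2) * real k / 2)
                     rep0 lmax k C lev children r1 r2 c (rep c)
                   \<and> layer (rep c) \<le> lmax)"
proof -
  note CH = assms(4) and R = assms(9) and inj = assms(10) and R0 = assms(11)
  define w where "w = hier_weight C children rep"
  define \<tau> where "\<tau> = (r1 + r2) * real k / 2"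
  have levC: "lev c \<le> lmax" if "c \<in> C" for c
    using CH that unfolding concept_hierarchy_def by auto
  have layC: "layer (rep c) = lev c" if "c \<in> C" for c
    using R that unfolding layer_neurons_def by auto
  have memN: "rep c \<in> neurons lmax n" if "c \<in> C" for c
    using R that levC[OF that] unfolding neurons_def by auto
  have key: "\<forall>c\<in>C. lev c = l \<longrightarrow>
       (c \<in> supp_level C lev children k r2 B l \<longrightarrow> y (t + l) (rep c)) \<and>
       (c \<notin> supp_level C lev children k r1 B l \<longrightarrow> \<not> y (t + l) (rep c))"
    if run: "net_run lmax n w \<tau> y" and B: "B \<subseteq> level_set C lev 0"
      and pres: "presented n rep0 B y t" and ll: "l \<le> lmax" for y B t l
    using ll
  proof (induction l)
    case 0
    show ?case
    proof (intro ballI impI)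
      fix c assume c: "c \<in> C" "lev c = 0"
      have cD: "c \<in> level_set D lev 0" using c CH unfolding concept_hierarchy_def level_set_def by auto
      have BD: "B \<subseteq> level_set D lev 0" using B CH unfolding concept_hierarchy_def level_set_def by auto
      have rc: "rep c = rep0 c" using R0 c unfolding level_set_def by auto
      have inj0: "inj_on rep0 (level_set D lev 0)" using assms(8) bij_betw_def by blast
      have in0: "rep0 c \<in> layer_neurons n 0" using assms(8) cD bij_betwE by blast
      have "y t (rep0 c) \<longleftrightarrow> rep0 c \<in> rep0 ` B"
        using pres in0 unfolding presented_def by blast
      also have "\<dots> \<longleftrightarrow> c \<in> B" using inj_on_image_mem_iff[OF inj0 cD BD] .
      finally have "y t (rep c) \<longleftrightarrow> c \<in> B" using rc by simp
      thus "(c \<in> supp_level C lev children k r2 B 0 \<longrightarrow> y (t + 0) (rep c)) \<and>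
            (c \<notin> supp_level C lev children k r1 B 0 \<longrightarrow> \<not> y (t + 0) (rep c))"
        using c by (auto simp: level_set_def)
    qed
  next
    case (Suc l)
    note IH = Suc.IH[OF Suc_leD[OF Suc.prems]]
    show ?case
    proof (intro ballI impI)
      fix c assume c: "c \<in> C" "lev c = Suc l"
      have ch: "children c \<subseteq> level_set C lev l" "finite (children c)"
      proof -
    have "\<forall>c\<in>C. 1 \<le> lev c \<longrightarrow> children c \<subseteq> level_set C lev (lev c - 1) \<and> finite (children c)"
      using CH unfolding concept_hierarchy_def by blast
    hence "1 \<le> lev c \<longrightarrow> children c \<subseteq> level_set C lev (lev c - 1) \<and> finite (children c)" using c(1) by blast
    hence "children c \<subseteq> level_set C lev (lev c - 1) \<and> finite (children c)" using c(2) by simp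
    thus "children c \<subseteq> level_set C lev l" "finite (children c)" using c(2) by simp_all
  qed
      have lay: "layer (rep c) = Suc l" using layC c by simp
      have fire: "y (t + Suc l) (rep c) \<longleftrightarrow> real (card {d \<in> children c. y (t + l) (rep d)}) \<ge> \<tau>"
      proof -
        have "y (Suc (t + l)) (rep c) \<longleftrightarrow>
          (\<Sum>v\<in>layer_neurons n (layer (rep c) - 1). w v (rep c) * (if y (t + l) v then 1 else 0)) \<ge> \<tau>"
          using run memN[OF c(1)] lay unfolding net_run_def by auto
        also have "\<dots> \<longleftrightarrow> real (card {d \<in> children c. y (t + l) (rep d)}) \<ge> \<tau>"
          using pot_eq[OF CH R inj c, of "y (t + l)"] lay unfolding w_def by simp
        finally show ?thesis by simp
      qed
      have chl: "d \<in> C \<and> lev d = l" if "d \<in> children c" for d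
        using that ch(1) unfolding level_set_def by auto
      have s2: "children c \<inter> supp_level C lev children k r2 B l \<subseteq> {d \<in> children c. y (t + l) (rep d)}"
        using IH chl by blast
      have s1: "{d \<in> children c. y (t + l) (rep d)} \<subseteq> children c \<inter> supp_level C lev children k r1 B l"
        using IH chl by blast
      show "(c \<in> supp_level C lev children k r2 B (Suc l) \<longrightarrow> y (t + Suc l) (rep c)) \<and>
            (c \<notin> supp_level C lev children k r1 B (Suc l) \<longrightarrow> \<not> y (t + Suc l) (rep c))"
      proof (intro conjI impI)
        assume "c \<in> supp_level C lev children k r2 B (Suc l)"
        hence a: "real (card (children c \<inter> supp_level C lev children k r2 B l)) \<ge> r2 * real k" by simp
        have "card (children c \<inter> supp_level C lev children k r2 B l) \<le> card {d \<in> children c. y (t + l) (rep d)}"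
          by (rule card_mono) (use ch(2) s2 in auto)
        moreover have "\<tau> \<le> r2 * real k" unfolding \<tau>_def using assms(6) by (simp add: field_simps mult_right_mono)
        ultimately show "y (t + Suc l) (rep c)" using fire a
          by (smt (verit) of_nat_le_iff)
      next
        assume "c \<notin> supp_level C lev children k r1 B (Suc l)"
        hence a: "real (card (children c \<inter> supp_level C lev children k r1 B l)) < r1 * real k"
          using c by (simp add: level_set_def)
        have "card {d \<in> children c. y (t + l) (rep d)} \<le> card (children c \<inter> supp_level C lev children k r1 B l)"
          by (rule card_mono) (use ch(2) s1 in auto)
        moreover have "r1 * real k \<le> \<tau>" unfolding \<tau>_def using assms(6) by (simp add: field_simps mult_right_mono)
        ultimately show "\<not> y (t + Suc l) (rep c)" using fire a
          by (smt (verit) of_nat_le_iff)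
      qed
    qed
  qed
  have rv: "recognizes_via lmax n w \<tau> rep0 lmax k C lev children r1 r2 c (rep c)" if c: "c \<in> C" for c
    unfolding recognizes_via_def
  proof (intro conjI allI impI)
    show "rep c \<in> neurons lmax n" using memN c .
  next
    fix y B t assume run: "net_run lmax n w \<tau> y" and B: "B \<subseteq> level_set C lev 0"
      and pres: "presented n rep0 B y t"
    note K = key[OF run B pres levC[OF c], rule_format, OF c refl]
    show "c \<in> supported lmax C lev children k r2 B \<Longrightarrow> y (t + layer (rep c)) (rep c)"
      using K supported_iff[of c C lev lmax, OF c levC[OF c]] layC[OF c] by auto
    show "c \<notin> supported lmax C lev children k r1 B \<Longrightarrow> \<not> y (t + layer (rep c)) (rep c)"
      using K supported_iff[of c C lev lmax, OF c levC[OF c]] layC[OF c] by auto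
  qed
  show ?thesis
    unfolding recognizes_hierarchy_def w_def[symmetric] \<tau>_def[symmetric]
    using rv layC levC by (metis le_refl)
qed

end
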